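(* Let $\mathbf{T}\in\{0,1\}^{n\times\ell}$ be a matrix all of whose columns are dirty, with $\delta(\mathbf{T})\le 3$. If $\mathcal{T}_3\ne\emptyset$, then $\ell\le|\mathcal{T}_2|+|\mathcal{T}_3|+2$.
   Context: A column of a binary matrix is dirty if it contains both $0$ and $1$. For rows $u,w\in\{0,1\}^\ell$, $D(u,w)=\{j\in[\ell]:u[j]\ne w[j]\}$ and $d(u,w)=|D(u,w)|$; $\delta(\mathbf{T})=\max_{i\ne i'}d(\mathbf{T}[i],\mathbf{T}[i'])$ where $\mathbf{T}[i]$ is the $i$-th row. For $x\in\mathbb{N}$, $\mathcal{T}_x$ is the set system (without duplicates) $\{D(\mathbf{T}[i],\mathbf{T}[n]): i\in[n-1],\ d(\mathbf{T}[i],\mathbf{T}[n])=x\}$. *)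

theory Defs
  imports Main
begin

(* A binary n x l matrix is modelled as T :: nat => nat => bool, with rows indexed by
   {1..n}, columns by {1..l}; True = 1, False = 0. Entries outside the index ranges are ignored. *)

definition dirty :: "(nat \<Rightarrow> nat \<Rightarrow> bool) \<Rightarrow> nat \<Rightarrow> nat \<Rightarrow> bool" where
  "dirty T n j \<longleftrightarrow> (\<exists>i\<in>{1..n}. T i j) \<and> (\<exists>i\<in>{1..n}. \<not> T i j)"

definition Dset :: "(nat \<Rightarrow> nat \<Rightarrow> bool) \<Rightarrow> nat \<Rightarrow> nat \<Rightarrow> nat \<Rightarrow> nat set" where
  "Dset T l i i' = {j \<in> {1..l}. T i j \<noteq> T i' j}"

definition dH :: "(nat \<Rightarrow> nat \<Rightarrow> bool) \<Rightarrow> nat \<Rightarrow> nat \<Rightarrow> nat \<Rightarrow> nat" where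
  "dH T l i i' = card (Dset T l i i')"

(* delta(T) = max over distinct rows; convention 0 when there are fewer than 2 rows *)
definition delta :: "(nat \<Rightarrow> nat \<Rightarrow> bool) \<Rightarrow> nat \<Rightarrow> nat \<Rightarrow> nat" where
  "delta T n l = Max ({dH T l i i' | i i'. i \<in> {1..n} \<and> i' \<in> {1..n} \<and> i \<noteq> i'} \<union> {0})"

definition Tfam :: "(nat \<Rightarrow> nat \<Rightarrow> bool) \<Rightarrow> nat \<Rightarrow> nat \<Rightarrow> nat \<Rightarrow> nat set set" where
  "Tfam T n l x = {Dset T l i n | i. i \<in> {1..n-1} \<and> dH T l i n = x}"

end

theory Submission
  imports Defs
begin

lemma comb3:
  fixes A B :: "nat set"
  assumes "finite A" "finite B" "card A = 3" "card ((A - B) \<union> (B - A)) \<le> 3" "card B \<le> 3"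
  shows "card (B - A) \<le> 1 \<and> (card B \<le> 1 \<longrightarrow> B \<subseteq> A)"
proof -
  have e1: "card ((A - B) \<union> (B - A)) = card (A - B) + card (B - A)"
    by (rule card_Un_disjoint) (use assms in auto)
  have e2: "card A = card (A \<inter> B) + card (A - B)"
    using assms(1) by (metis Int_Diff_disjoint Int_Diff_Un card_Un_disjoint finite_Diff finite_Int)
  have e3: "card B = card (A \<inter> B) + card (B - A)"
    using assms(2) by (metis Int_Diff_disjoint Int_Diff_Un card_Un_disjoint finite_Diff finite_Int Int_commute)
  have "card (B - A) \<le> 1" using e1 e2 e3 assms by linarith
  moreover have "card B \<le> 1 \<longrightarrow> B \<subseteq> A"
  proof
    assume "card B \<le> 1"
    then have "card (B - A) = 0" using e1 e2 e3 assms by linarith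
    then show "B \<subseteq> A" using assms(2) by auto
  qed
  ultimately show ?thesis by blast
qed

theorem lemma14:
  fixes T :: "nat \<Rightarrow> nat \<Rightarrow> bool" and n l :: nat
  assumes "\<forall>j\<in>{1..l}. dirty T n j"
    and "delta T n l \<le> 3"
    and "Tfam T n l 3 \<noteq> {}"
  shows "l \<le> card (Tfam T n l 2) + card (Tfam T n l 3) + 2"
proof -
  define S where "S i = Dset T l i n" for i
  have finS: "finite (S i)" "S i \<subseteq> {1..l}" for i unfolding S_def Dset_def by auto
  have fin: "finite {dH T l i i' | i i'. i \<in> {1..n} \<and> i' \<in> {1..n} \<and> i \<noteq> i'}"
  proof -
    have "{dH T l i i' | i i'. i \<in> {1..n} \<and> i' \<in> {1..n} \<and> i \<noteq> i'}
          \<subseteq> (\<lambda>(i,i'). dH T l i i') ` ({1..n}\<times>{1..n})" by auto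
    then show ?thesis by (rule finite_subset) auto
  qed
  have dle: "dH T l i i' \<le> 3" if "i \<in> {1..n}" "i' \<in> {1..n}" "i \<noteq> i'" for i i'
  proof -
    have "dH T l i i' \<le> delta T n l" unfolding delta_def
      by (rule Max_ge) (use fin that in auto)
    then show ?thesis using assms(2) by linarith
  qed
  have sym: "Dset T l i i' = (S i - S i') \<union> (S i' - S i)" for i i'
    unfolding S_def Dset_def by auto
  have symc: "card ((S i - S i') \<union> (S i' - S i)) \<le> 3"
    if "i \<in> {1..n}" "i' \<in> {1..n}" "i \<noteq> i'" for i i'
    using dle[OF that] sym unfolding dH_def by metis
  have cS: "card (S i) \<le> 3" if "i \<in> {1..n-1}" for i
    using dle[of i n] that unfolding dH_def S_def by auto
  obtain A where A: "A \<in> Tfam T n l 3" using assms(3) by auto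
  then obtain a where a: "a \<in> {1..n-1}" "A = S a" "card A = 3"
    unfolding Tfam_def dH_def S_def by auto
  define G where "G = (Tfam T n l 2 \<union> Tfam T n l 3) - {A}"
  have Tsub: "Tfam T n l x \<subseteq> Pow {1..l}" for x unfolding Tfam_def Dset_def by auto
  have finT: "finite (Tfam T n l x)" for x using Tsub by (rule finite_subset) auto
  have disj: "Tfam T n l 2 \<inter> Tfam T n l 3 = {}" unfolding Tfam_def dH_def by auto
  have cG: "card G = card (Tfam T n l 2) + card (Tfam T n l 3) - 1"
    unfolding G_def using A finT disj by (simp add: card_Un_disjoint)
  have cover: "{1..l} \<subseteq> A \<union> \<Union>((\<lambda>B. B - A) ` G)"
  proof
    fix j assume j: "j \<in> {1..l}"
    obtain i where i: "i \<in> {1..n-1}" "j \<in> S i"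
    proof -
      obtain i1 i2 where i12: "i1 \<in> {1..n}" "T i1 j" "i2 \<in> {1..n}" "\<not> T i2 j"
        using assms(1) j unfolding dirty_def by blast
      show ?thesis
      proof (cases "T n j")
        case True
        then have "i2 \<noteq> n" using i12 by auto
        then show ?thesis using that[of i2] i12 j True unfolding S_def Dset_def by auto
      next
        case False
        then have "i1 \<noteq> n" using i12 by auto
        then show ?thesis using that[of i1] i12 j False unfolding S_def Dset_def by auto
      qed
    qed
    show "j \<in> A \<union> \<Union>((\<lambda>B. B - A) ` G)"
    proof (cases "S i = A")
      case True then show ?thesis using i by auto
    next
      case False
      then have "i \<noteq> a" using a by auto
      have sc: "card ((A - S i) \<union> (S i - A)) \<le> 3"
      proof -
      have "a \<in> {1..n}" "i \<in> {1..n}" using a(1) i(1) by auto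
      moreover have "a \<noteq> i" using \<open>i \<noteq> a\<close> by simp
      ultimately have "card ((S a - S i) \<union> (S i - S a)) \<le> 3" by (rule symc)
      then show ?thesis using a(2) by simp
    qed
      have c: "card (S i - A) \<le> 1 \<and> (card (S i) \<le> 1 \<longrightarrow> S i \<subseteq> A)"
        by (rule comb3) (use finS a sc cS i in auto)
      show ?thesis
      proof (cases "card (S i) \<le> 1")
        case True then show ?thesis using c i by auto
      next
        case nt: False
        then have "card (S i) = 2 \<or> card (S i) = 3" using cS[OF i(1)] by linarith
        then have "S i \<in> Tfam T n l 2 \<union> Tfam T n l 3"
          using i unfolding Tfam_def dH_def S_def by auto
        then have "S i \<in> G" using False unfolding G_def by auto
        then show ?thesis using i by auto
      qed
    qed
  qed
  have finG: "finite G" unfolding G_def using finT by auto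
  have GP: "G \<subseteq> Pow {1..l}" unfolding G_def using Tsub by blast
  have fU: "finite (A \<union> \<Union>((\<lambda>B. B - A) ` G))"
  proof (rule finite_subset[of _ "{1..l}"])
    show "A \<union> \<Union>((\<lambda>B. B - A) ` G) \<subseteq> {1..l}" using GP finS(2) a by blast
  qed simp
  have "l = card {1..l}" by simp
  also have "\<dots> \<le> card (A \<union> \<Union>((\<lambda>B. B - A) ` G))"
    by (rule card_mono[OF fU cover])
  also have "\<dots> \<le> card A + card (\<Union>((\<lambda>B. B - A) ` G))" by (rule card_Un_le)
  also have "card (\<Union>((\<lambda>B. B - A) ` G)) \<le> sum card ((\<lambda>B. B - A) ` G)"
    by (rule card_Union_le_sum_card)
  also have "sum card ((\<lambda>B. B - A) ` G) \<le> sum (\<lambda>_. 1) ((\<lambda>B. B - A) ` G)"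
  proof (rule sum_mono)
    fix X assume "X \<in> (\<lambda>B. B - A) ` G"
    then obtain B where B: "B \<in> G" "X = B - A" by auto
    then obtain i where i: "i \<in> {1..n-1}" "B = S i" "B \<noteq> A"
      unfolding G_def Tfam_def S_def by auto
    then have "i \<noteq> a" using a by auto
    have sc: "card ((A - S i) \<union> (S i - A)) \<le> 3"
    proof -
      have "a \<in> {1..n}" "i \<in> {1..n}" using a(1) i(1) by auto
      moreover have "a \<noteq> i" using \<open>i \<noteq> a\<close> by simp
      ultimately have "card ((S a - S i) \<union> (S i - S a)) \<le> 3" by (rule symc)
      then show ?thesis using a(2) by simp
    qed
    have "card (S i - A) \<le> 1 \<and> (card (S i) \<le> 1 \<longrightarrow> S i \<subseteq> A)"
      by (rule comb3) (use finS a sc cS i in auto)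
    then show "card X \<le> 1" using B i by auto
  qed
  also have "\<dots> = card ((\<lambda>B. B - A) ` G)" by simp
  also have "\<dots> \<le> card G" using finG by (rule card_image_le)
  finally have fin1: "l \<le> card A + card G" by simp
  have "card (Tfam T n l 3) \<noteq> 0" using A finT[of 3] by auto
  then show ?thesis using fin1 cG a(3) by linarith
qed

end
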